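(* Let $\mathbf{a}=(a_1,\dots,a_n)\in\mathbb{Z}_{\ge0}^n$ with $\mathbf{a}\ne\mathbf{0}$ and $a_1\ge\dots\ge a_n$, let $0<\beta<1$, $\epsilon>0$ and $c_2>0$ with $0<c_2\epsilon<1$, and suppose $1-\beta\ge\dfrac{c_2\epsilon}{n\|\mathbf{a}\|_1}$. If a real number $Z$ satisfies $$\mathrm{Vol}(Q_0\cap Q_1)\le Z\le\Big(1+\frac{c_2\epsilon^2}{2n}\Big)\mathrm{Vol}(Q_0\cap Q_1),$$ then $$(1-\epsilon)\Big(\frac{2^n}{n!}-\mathrm{Vol}(Q_1\cap Q_0)\Big)\le \frac{2^n}{n!}-Z\le \frac{2^n}{n!}-\mathrm{Vol}(Q_1\cap Q_0).$$
   Context: For $\mathbf{c}\in\mathbb{R}^n$, $r\ge 0$, $C(\mathbf{c},r)=\{\mathbf{x}\in\mathbb{R}^n:\|\mathbf{x}-\mathbf{c}\|_1\le r\}$. For $k=0,1,2,\dots$, $Q_k=C((1-\beta^k)\mathbf{a},\beta^k)$. *)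

theory Defs
  imports "HOL-Analysis.Analysis"
begin

text \<open>Points of R^n are represented as extensional functions on the index set {..<n}
  (coordinates 0,...,n-1); Lebesgue measure on R^n is the product measure of lborel.\<close>

definition l1_ball :: "nat \<Rightarrow> (nat \<Rightarrow> real) \<Rightarrow> real \<Rightarrow> (nat \<Rightarrow> real) set" where
  "l1_ball n c r = {x \<in> {..<n} \<rightarrow>\<^sub>E UNIV. (\<Sum>i<n. \<bar>x i - c i\<bar>) \<le> r}"

definition Qk :: "nat \<Rightarrow> (nat \<Rightarrow> nat) \<Rightarrow> real \<Rightarrow> nat \<Rightarrow> (nat \<Rightarrow> real) set" where
  "Qk n a \<beta> k = l1_ball n (\<lambda>i. (1 - \<beta> ^ k) * real (a i)) (\<beta> ^ k)"

definition vol :: "nat \<Rightarrow> (nat \<Rightarrow> real) set \<Rightarrow> real" where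
  "vol n S = measure (Pi\<^sub>M {..<n} (\<lambda>_. lborel)) S"

end

theory Submission
  imports Defs
begin

definition gv :: "nat \<Rightarrow> real \<Rightarrow> real" where
  "gv m r = (if r < 0 then 0 else (2*r)^m / fact m)"

lemma gv_nonneg: "0 \<le> gv m r"
  by (simp add: gv_def)

lemma gv_mono: "r \<le> r' \<Longrightarrow> gv m r \<le> gv m r'"
  by (auto simp: gv_def intro!: divide_right_mono power_mono)

lemma tent_integral:
  fixes r c :: real
  shows "(\<integral>\<^sup>+x. ennreal (gv m (r - \<bar>x - c\<bar>)) \<partial>lborel) = ennreal (gv (Suc m) r)"
proof (cases "r < 0")
  case True
  have "\<And>x. gv m (r - \<bar>x - c\<bar>) = 0"
  proof -
    fix x have "r - \<bar>x - c\<bar> < 0" using True by linarith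
    then show "gv m (r - \<bar>x - c\<bar>) = 0" unfolding gv_def by (simp only: if_True)
  qed
  then show ?thesis using True by (simp add: gv_def)
next
  case False
  define f1 where "f1 x = (2*(r - c + x))^m / fact m" for x
  define f2 where "f2 x = (2*(r + c - x))^m / fact m" for x
  define F1 where "F1 x = (2*(r - c + x))^(Suc m) / (2 * fact (Suc m))" for x
  define F2 where "F2 x = - (((2*(r + c - x))^(Suc m)) / (2 * fact (Suc m)))" for x
  have d1: "DERIV F1 x :> f1 x" for x
  proof -
    have "((\<lambda>x. (2*(r - c + x))^(Suc m)) has_real_derivative ((1 + real m) * (2 * (2*(r - c + x))^m))) (at x)"
      by (rule DERIV_power_Suc) (auto intro!: derivative_eq_intros)
    from DERIV_cdivide[OF this, of "2 * fact (Suc m)"]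
    show ?thesis unfolding F1_def f1_def by (simp add: fact_Suc)
  qed
  have d2: "DERIV F2 x :> f2 x" for x
  proof -
    have "((\<lambda>x. (2*(r + c - x))^(Suc m)) has_real_derivative ((1 + real m) * ((-2) * (2*(r + c - x))^m))) (at x)"
      by (rule DERIV_power_Suc) (auto intro!: derivative_eq_intros)
    from DERIV_minus[OF DERIV_cdivide[OF this, of "2 * fact (Suc m)"]]
    show ?thesis unfolding F2_def f2_def by (simp add: fact_Suc)
  qed
  have m1[measurable]: "f1 \<in> borel_measurable borel" unfolding f1_def by measurable
  have m2[measurable]: "f2 \<in> borel_measurable borel" unfolding f2_def by measurable
  have e1: "(\<integral>\<^sup>+x. ennreal (f1 x) * indicator {c-r..c} x \<partial>lborel) = F1 c - F1 (c-r)"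
    by (rule nn_integral_FTC_Icc[OF m1 d1]) (use False in \<open>auto simp: f1_def\<close>)
  have e2: "(\<integral>\<^sup>+x. ennreal (f2 x) * indicator {c..c+r} x \<partial>lborel) = F2 (c+r) - F2 c"
    by (rule nn_integral_FTC_Icc[OF m2 d2]) (use False in \<open>auto simp: f2_def\<close>)
  have "(\<integral>\<^sup>+x. ennreal (gv m (r - \<bar>x - c\<bar>)) \<partial>lborel)
      = (\<integral>\<^sup>+x. ennreal (f1 x) * indicator {c-r..c} x + ennreal (f2 x) * indicator {c<..c+r} x \<partial>lborel)"
    by (rule nn_integral_cong) (auto simp: gv_def f1_def f2_def indicator_def abs_if algebra_simps)
  also have "\<dots> = (\<integral>\<^sup>+x. ennreal (f1 x) * indicator {c-r..c} x \<partial>lborel) +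
       (\<integral>\<^sup>+x. ennreal (f2 x) * indicator {c<..c+r} x \<partial>lborel)"
    by (rule nn_integral_add) auto
  also have "(\<integral>\<^sup>+x. ennreal (f2 x) * indicator {c<..c+r} x \<partial>lborel)
      = (\<integral>\<^sup>+x. ennreal (f2 x) * indicator {c..c+r} x \<partial>lborel)"
    by (intro nn_integral_cong_AE eventually_mono[OF AE_lborel_singleton[of c]])
       (auto simp: indicator_def)
  also have "(\<integral>\<^sup>+x. ennreal (f1 x) * indicator {c-r..c} x \<partial>lborel) + \<dots>
      = ennreal (F1 c - F1 (c-r)) + ennreal (F2 (c+r) - F2 c)"
    using e1 e2 by simp
  also have "\<dots> = ennreal (gv (Suc m) r)"
  proof -
    have "F1 c - F1 (c-r) + (F2 (c+r) - F2 c) = gv (Suc m) r"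
      using False unfolding F1_def F2_def gv_def
      by (simp del: fact_Suc add: field_simps)
    moreover have "0 \<le> F1 c - F1 (c-r)" "0 \<le> F2 (c+r) - F2 c"
      using False unfolding F1_def F2_def by (simp_all del: fact_Suc)
    ultimately show ?thesis by (simp del: fact_Suc add: ennreal_plus[symmetric])
  qed
  finally show ?thesis .
qed

definition ballI :: "nat set \<Rightarrow> (nat \<Rightarrow> real) \<Rightarrow> real \<Rightarrow> (nat \<Rightarrow> real) set" where
  "ballI I c r = {x \<in> I \<rightarrow>\<^sub>E UNIV. (\<Sum>i\<in>I. \<bar>x i - c i\<bar>) \<le> r}"

lemma ballI_alt: "ballI I c r = {x \<in> space (Pi\<^sub>M I (\<lambda>_. lborel)). (\<Sum>i\<in>I. \<bar>x i - c i\<bar>) \<le> r}"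
  by (simp add: ballI_def space_PiM)

lemma ballI_sets[measurable]: "ballI I c r \<in> sets (Pi\<^sub>M I (\<lambda>_. lborel))"
  unfolding ballI_alt by measurable

lemma ballI_slice:
  assumes "i \<notin> I" "y \<in> space (Pi\<^sub>M I (\<lambda>_. lborel))" "finite I"
  shows "indicator (ballI (insert i I) c r) (y(i := t)) = (indicator (ballI I c (r - \<bar>t - c i\<bar>)) y :: ennreal)"
proof -
  have yE: "y \<in> I \<rightarrow>\<^sub>E UNIV" using assms(2) by (simp add: space_PiM)
  then have "y(i := t) \<in> insert i I \<rightarrow>\<^sub>E UNIV" by (auto simp: PiE_def extensional_def)
  moreover have "(\<Sum>j\<in>insert i I. \<bar>(y(i := t)) j - c j\<bar>) = \<bar>t - c i\<bar> + (\<Sum>j\<in>I. \<bar>y j - c j\<bar>)"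
  proof -
    have "(\<Sum>j\<in>I. \<bar>(y(i := t)) j - c j\<bar>) = (\<Sum>j\<in>I. \<bar>y j - c j\<bar>)"
      using assms(1) by (intro sum.cong) auto
    then show ?thesis using assms(1,3) by (simp add: sum.insert)
  qed
  ultimately show ?thesis using yE by (auto simp: ballI_def indicator_def)
qed

lemma ball_vol:
  assumes "finite I"
  shows "emeasure (Pi\<^sub>M I (\<lambda>_. lborel)) (ballI I c r) = ennreal (gv (card I) r)"
  using assms
proof (induction I arbitrary: r rule: finite_induct)
  case empty
  show ?case by (cases "r < 0") (auto simp: ballI_def gv_def PiM_empty)
next
  case (insert i I r)
  interpret product_sigma_finite "\<lambda>_. lborel" by standard
  have "emeasure (Pi\<^sub>M (insert i I) (\<lambda>_. lborel)) (ballI (insert i I) c r)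
     = (\<integral>\<^sup>+z. indicator (ballI (insert i I) c r) z \<partial>Pi\<^sub>M (insert i I) (\<lambda>_. lborel))"
    by (simp add: nn_integral_indicator)
  also have "\<dots> = (\<integral>\<^sup>+t. \<integral>\<^sup>+y. indicator (ballI (insert i I) c r) (y(i := t)) \<partial>Pi\<^sub>M I (\<lambda>_. lborel) \<partial>lborel)"
    using insert.hyps by (subst product_nn_integral_insert_rev) auto
  also have "\<dots> = (\<integral>\<^sup>+t. \<integral>\<^sup>+y. indicator (ballI I c (r - \<bar>t - c i\<bar>)) y \<partial>Pi\<^sub>M I (\<lambda>_. lborel) \<partial>lborel)"
    using insert.hyps by (intro nn_integral_cong ballI_slice) auto
  also have "\<dots> = (\<integral>\<^sup>+t. ennreal (gv (card I) (r - \<bar>t - c i\<bar>)) \<partial>lborel)"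
    by (intro nn_integral_cong) (simp add: nn_integral_indicator insert.IH)
  also have "\<dots> = ennreal (gv (Suc (card I)) r)" by (rule tent_integral)
  finally show ?case using insert.hyps by simp
qed

lemma ballI_mono: "r \<le> r' \<Longrightarrow> ballI I c r \<subseteq> ballI I c r'"
  by (auto simp: ballI_def)

lemma inter_bound:
  fixes c :: "nat \<Rightarrow> real"
  assumes n: "n = Suc m" and c0: "0 \<le> c 0" and \<beta>: "\<beta> \<le> 1"
  shows "emeasure (Pi\<^sub>M {..<n} (\<lambda>_. lborel)) (ballI {..<n} (\<lambda>_. 0) 1 \<inter> ballI {..<n} c \<beta>)
          \<le> ennreal (gv n (1 - c 0 / 2))"
proof -
  interpret product_sigma_finite "\<lambda>_. lborel" by standard
  define J where "J = {Suc 0..<n}"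
  have IJ: "{..<n} = insert 0 J" "0 \<notin> J" "finite J" "card J = m"
    using n by (auto simp: J_def)
  define S where "S = ballI {..<n} (\<lambda>_. 0) 1 \<inter> ballI {..<n} c \<beta>"
  have S_sets[measurable]: "S \<in> sets (Pi\<^sub>M (insert 0 J) (\<lambda>_. lborel))"
    unfolding S_def IJ(1)[symmetric] by measurable
  have "emeasure (Pi\<^sub>M {..<n} (\<lambda>_. lborel)) S
     = (\<integral>\<^sup>+z. indicator S z \<partial>Pi\<^sub>M (insert 0 J) (\<lambda>_. lborel))"
    unfolding IJ(1) by (simp add: nn_integral_indicator)
  also have "\<dots> = (\<integral>\<^sup>+t. \<integral>\<^sup>+y. indicator S (y(0 := t)) \<partial>Pi\<^sub>M J (\<lambda>_. lborel) \<partial>lborel)"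
    using IJ by (subst product_nn_integral_insert_rev) auto
  also have "\<dots> \<le> (\<integral>\<^sup>+t. ennreal (gv m (1 - c 0 / 2 - \<bar>t - c 0 / 2\<bar>)) \<partial>lborel)"
  proof (rule nn_integral_mono)
    fix t :: real
    show "(\<integral>\<^sup>+y. indicator S (y(0 := t)) \<partial>Pi\<^sub>M J (\<lambda>_. lborel)) \<le> ennreal (gv m (1 - c 0 / 2 - \<bar>t - c 0 / 2\<bar>))"
    proof (cases "\<bar>t - c 0\<bar> \<le> \<bar>t\<bar>")
      case True
      have "(\<integral>\<^sup>+y. indicator S (y(0 := t)) \<partial>Pi\<^sub>M J (\<lambda>_. lborel))
          \<le> (\<integral>\<^sup>+y. indicator (ballI J (\<lambda>_. 0) (1 - \<bar>t - 0\<bar>)) y \<partial>Pi\<^sub>M J (\<lambda>_. lborel))"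
      proof (rule nn_integral_mono)
        fix y :: "nat \<Rightarrow> real" assume y: "y \<in> space (Pi\<^sub>M J (\<lambda>_. lborel))"
        have "indicator S (y(0 := t)) \<le> (indicator (ballI (insert 0 J) (\<lambda>_. 0) 1) (y(0 := t)) :: ennreal)"
          unfolding S_def IJ(1) by (auto simp: indicator_def)
        also have "\<dots> = indicator (ballI J (\<lambda>_. 0) (1 - \<bar>t - 0\<bar>)) y"
          using IJ y by (intro ballI_slice) auto
        finally show "indicator S (y(0 := t)) \<le> (indicator (ballI J (\<lambda>_. 0) (1 - \<bar>t - 0\<bar>)) y :: ennreal)" .
      qed
      also have "\<dots> = ennreal (gv m (1 - \<bar>t - 0\<bar>))"
        using IJ by (simp add: nn_integral_indicator ball_vol)
      also have "\<dots> \<le> ennreal (gv m (1 - c 0 / 2 - \<bar>t - c 0 / 2\<bar>))"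
        using True c0 by (intro ennreal_leI gv_mono) (auto simp: abs_if split: if_splits)
      finally show ?thesis .
    next
      case False
      have "(\<integral>\<^sup>+y. indicator S (y(0 := t)) \<partial>Pi\<^sub>M J (\<lambda>_. lborel))
          \<le> (\<integral>\<^sup>+y. indicator (ballI J c (1 - \<bar>t - c 0\<bar>)) y \<partial>Pi\<^sub>M J (\<lambda>_. lborel))"
      proof (rule nn_integral_mono)
        fix y :: "nat \<Rightarrow> real" assume y: "y \<in> space (Pi\<^sub>M J (\<lambda>_. lborel))"
        have "indicator S (y(0 := t)) \<le> (indicator (ballI (insert 0 J) c \<beta>) (y(0 := t)) :: ennreal)"
          unfolding S_def IJ(1) by (auto simp: indicator_def)
        also have "\<dots> = indicator (ballI J c (\<beta> - \<bar>t - c 0\<bar>)) y"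
          using IJ y by (intro ballI_slice) auto
        also have "\<dots> \<le> indicator (ballI J c (1 - \<bar>t - c 0\<bar>)) y"
          using ballI_mono[of "\<beta> - \<bar>t - c 0\<bar>" "1 - \<bar>t - c 0\<bar>" J c] \<beta>
          by (auto simp: indicator_def)
        finally show "indicator S (y(0 := t)) \<le> (indicator (ballI J c (1 - \<bar>t - c 0\<bar>)) y :: ennreal)" .
      qed
      also have "\<dots> = ennreal (gv m (1 - \<bar>t - c 0\<bar>))"
        using IJ by (simp add: nn_integral_indicator ball_vol)
      also have "\<dots> \<le> ennreal (gv m (1 - c 0 / 2 - \<bar>t - c 0 / 2\<bar>))"
        using False c0 by (intro ennreal_leI gv_mono) (auto simp: abs_if split: if_splits)
      finally show ?thesis .
    qed
  qed
  also have "\<dots> = ennreal (gv n (1 - c 0 / 2))"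
    using n by (simp add: tent_integral)
  finally show ?thesis unfolding S_def .
qed

lemma bern_aux:
  fixes d :: real and n :: nat
  assumes "0 \<le> d" "d \<le> 1" "n > 0"
  shows "(1 - d / n) ^ n * (1 + d) \<le> 1"
proof -
  have "1 + d = 1 + real n * (d / n)" using assms by simp
  also have "\<dots> \<le> (1 + d / n) ^ n"
    by (rule Bernoulli_inequality) (use assms in \<open>simp add: field_simps\<close>)
  finally have b: "1 + d \<le> (1 + d / n) ^ n" .
  have q: "0 \<le> d / n" "d / n \<le> 1" using assms by (auto simp: field_simps)
  have "(1 - d / n) ^ n * (1 + d) \<le> (1 - d / n) ^ n * (1 + d / n) ^ n"
    using b q by (intro mult_left_mono) auto
  also have "\<dots> = (1 - (d/n)^2) ^ n" by (simp add: power_mult_distrib[symmetric] power2_eq_square algebra_simps)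
  also have "\<dots> \<le> 1" using q by (intro power_le_one) (auto simp: power_le_one)
  finally show ?thesis .
qed

theorem mainTheorem12:
  fixes n :: nat and a :: "nat \<Rightarrow> nat" and \<beta> \<epsilon> c\<^sub>2 Z :: real
  assumes a_nonzero: "\<exists>i<n. a i \<noteq> 0"
    and a_sorted: "\<forall>i j. i \<le> j \<longrightarrow> j < n \<longrightarrow> a j \<le> a i"
    and \<beta>: "0 < \<beta>" "\<beta> < 1"
    and \<epsilon>: "\<epsilon> > 0" and c2: "c\<^sub>2 > 0"
    and c2\<epsilon>: "0 < c\<^sub>2 * \<epsilon>" "c\<^sub>2 * \<epsilon> < 1"
    and \<beta>_bound: "1 - \<beta> \<ge> c\<^sub>2 * \<epsilon> / (real n * (\<Sum>i<n. real (a i)))"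
    and Z_lower: "vol n (Qk n a \<beta> 0 \<inter> Qk n a \<beta> 1) \<le> Z"
    and Z_upper: "Z \<le> (1 + c\<^sub>2 * \<epsilon>^2 / (2 * real n)) * vol n (Qk n a \<beta> 0 \<inter> Qk n a \<beta> 1)"
  shows "(1 - \<epsilon>) * (2 ^ n / fact n - vol n (Qk n a \<beta> 1 \<inter> Qk n a \<beta> 0)) \<le> 2 ^ n / fact n - Z
       \<and> 2 ^ n / fact n - Z \<le> 2 ^ n / fact n - vol n (Qk n a \<beta> 1 \<inter> Qk n a \<beta> 0)"
proof -
  obtain i0 where i0: "i0 < n" "a i0 \<noteq> 0" using a_nonzero by blast
  then obtain m where n: "n = Suc m" by (cases n) auto
  have npos: "real n > 0" using n by simp
  define A where "A = (\<Sum>i<n. real (a i))"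
  have A_pos: "A > 0"
  proof -
    have "real (a i0) \<le> A" unfolding A_def using i0 by (intro member_le_sum) auto
    then show ?thesis using i0 by linarith
  qed
  have A_le: "A \<le> real n * real (a 0)"
  proof -
    have "A \<le> (\<Sum>i<n. real (a 0))" unfolding A_def
      using a_sorted by (intro sum_mono) auto
    then show ?thesis by simp
  qed
  define c where "c = (\<lambda>i. (1 - \<beta>) * real (a i))"
  define V where "V = vol n (Qk n a \<beta> 0 \<inter> Qk n a \<beta> 1)"
  define U :: real where "U = 2 ^ n / fact n"
  define \<delta> where "\<delta> = c\<^sub>2 * \<epsilon> / (2 * real n)"
  have Q0: "Qk n a \<beta> 0 = ballI {..<n} (\<lambda>_. 0) 1"
    by (simp add: Qk_def l1_ball_def ballI_def)
  have Q1: "Qk n a \<beta> 1 = ballI {..<n} c \<beta>"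
    by (simp add: Qk_def l1_ball_def ballI_def c_def)
  have c0: "0 \<le> c 0" using \<beta> by (simp add: c_def)
  have em: "emeasure (Pi\<^sub>M {..<n} (\<lambda>_. lborel)) (Qk n a \<beta> 0 \<inter> Qk n a \<beta> 1) \<le> ennreal (gv n (1 - c 0 / 2))"
    unfolding Q0 Q1 using inter_bound[of n m c \<beta>] n c0 \<beta> by simp
  have V_le: "V \<le> gv n (1 - c 0 / 2)"
    unfolding V_def vol_def measure_def using em by (intro enn2real_leI gv_nonneg)
  have V_nonneg: "0 \<le> V" unfolding V_def vol_def by simp
  have c0_big: "c 0 / 2 \<ge> \<delta> / n"
  proof -
    have "c\<^sub>2 * \<epsilon> / (real n * A) * real (a 0) \<le> (1 - \<beta>) * real (a 0)"
      using \<beta>_bound by (intro mult_right_mono) (auto simp: A_def)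
    moreover have "c\<^sub>2 * \<epsilon> / (real n * A) * (A / real n) \<le> c\<^sub>2 * \<epsilon> / (real n * A) * real (a 0)"
      using A_le npos A_pos c2\<epsilon> by (intro mult_left_mono) (auto simp: field_simps)
    moreover have "c\<^sub>2 * \<epsilon> / (real n * A) * (A / real n) = 2 * (\<delta> / n)"
      using A_pos npos by (simp add: \<delta>_def field_simps power2_eq_square)
    moreover have "c 0 = (1 - \<beta>) * real (a 0)" by (simp add: c_def)
    ultimately show ?thesis by linarith
  qed
  have \<delta>: "0 \<le> \<delta>" "\<delta> \<le> 1" using c2\<epsilon> npos n by (auto simp: \<delta>_def field_simps)
  have key: "V * (1 + \<delta>) \<le> U"
  proof (cases "1 - c 0 / 2 < 0")
    case True
    then have "V \<le> 0" using V_le by (simp add: gv_def)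
    then show ?thesis using \<delta> V_nonneg by (simp add: U_def)
  next
    case False
    have "(1 - c 0 / 2) ^ n \<le> (1 - \<delta> / n) ^ n"
      using False c0_big by (intro power_mono) auto
    then have "(1 - c 0 / 2) ^ n * (1 + \<delta>) \<le> 1"
      using bern_aux[OF \<delta> npos[simplified]] \<delta>
      by (meson dual_order.trans mult_right_mono add_nonneg_nonneg zero_le_one)
    moreover have "gv n (1 - c 0 / 2) * (1 + \<delta>) = U * ((1 - c 0 / 2) ^ n * (1 + \<delta>))"
    proof -
      have "(2 * (1 - c 0 / 2)) ^ n = 2 ^ n * (1 - c 0 / 2) ^ n" by (rule power_mult_distrib)
      then show ?thesis using False by (simp add: gv_def U_def)
    qed
    moreover have "0 \<le> U" by (simp add: U_def)
    ultimately have "gv n (1 - c 0 / 2) * (1 + \<delta>) \<le> U"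
      using mult_left_le[of "(1 - c 0 / 2) ^ n * (1 + \<delta>)" U] by (simp only:)
    moreover have "V * (1 + \<delta>) \<le> gv n (1 - c 0 / 2) * (1 + \<delta>)"
      using V_le \<delta> by (intro mult_right_mono) auto
    ultimately show ?thesis by linarith
  qed
  have comm: "Qk n a \<beta> 1 \<inter> Qk n a \<beta> 0 = Qk n a \<beta> 0 \<inter> Qk n a \<beta> 1" by blast
  have Zu: "Z \<le> V + \<epsilon> * (\<delta> * V)"
    using Z_upper unfolding V_def[symmetric] \<delta>_def by (simp add: power2_eq_square field_simps)
  have "\<epsilon> * (\<delta> * V) \<le> \<epsilon> * (U - V)"
    using key \<epsilon> by (intro mult_left_mono) (auto simp: algebra_simps)
  then have "(1 - \<epsilon>) * (U - V) \<le> U - Z" using Zu by (simp add: algebra_simps)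
  moreover have "U - Z \<le> U - V" using Z_lower V_def by simp
  ultimately show ?thesis unfolding comm U_def V_def by simp
qed

end
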